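(* Let $V=\mathbb{C}^n$ and let $d>2$. Let $T\in S^d(V)\subset V^{\otimes d}$ be a symmetric tensor. (1) Suppose there exists $k\in\{1,\dots,d-1\}$ such that $\operatorname{rank}(T)\le \operatorname{f-rank}_{[1,\dots,k],[k+1,\dots,d]}(T)$. Then every minimal decomposition of $T$ is symmetric. (2) Let $D=\{a_i\}_i$ be a decomposition of $T$. Assume that for every subset $I\subset\{1,\dots,d\}$ with $|I|=d-2$ the set $D^{(I)}$ is linearly independent. Then $D$ is symmetric.
   Context: A decomposition of $T\in S^d(V)$ is a finite set $D=\{a_i\}_i$ of rank-one tensors $a_i=a_i^{(1)}\otimes\cdots\otimes a_i^{(d)}$ with $a_i^{(k)}\in V$, such that $T=\sum_i a_i$. It is minimal if the number of terms equals $\operatorname{rank}(T)$, the minimal number of rank-one tensors summing to $T$. A decomposition is symmetric if every $a_i$ lies in $S^d(V)$ (i.e. is a symmetric tensor). For $I\subset\{1,\dots,d\}$ with complement $I^C$, $\operatorname{f-rank}_{I,I^C}(T)$ denotes the rank of $T$ viewed as a matrix (element of $(\bigotimes_{j\in I}V)\otimes(\bigotimes_{j\in I^C}V)$) obtained by grouping the indices in $I$ and in $I^C$. For a decomposition $D$, $D^{(I)}=\{\bigotimes_{j\in I}a_i^{(j)}\}_i$. *)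

theory Defs
  imports "HOL-Analysis.Analysis" "HOL-Library.Multiset"
begin

text \<open>V = complex^'n (so n = CARD('n)).  An order-d tensor in the d-fold tensor power of V
is represented by its coordinate function on index lists of length d; it vanishes on lists
of any other length.\<close>

type_synonym 'n tensor = "'n list \<Rightarrow> complex"

definition is_tensor :: "nat \<Rightarrow> 'n tensor \<Rightarrow> bool" where
  "is_tensor d T \<longleftrightarrow> (\<forall>xs. length xs \<noteq> d \<longrightarrow> T xs = 0)"

definition symmetric_tensor :: "nat \<Rightarrow> 'n tensor \<Rightarrow> bool" where
  "symmetric_tensor d T \<longleftrightarrow> is_tensor d T \<and>
     (\<forall>xs ys. length xs = d \<longrightarrow> mset xs = mset ys \<longrightarrow> T xs = T ys)"

text \<open>The rank-one tensor a^(0) \<otimes> ... \<otimes> a^(d-1) (factors indexed 0..d-1).\<close>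
definition outer :: "nat \<Rightarrow> (nat \<Rightarrow> complex^'n) \<Rightarrow> 'n tensor" where
  "outer d a = (\<lambda>xs. if length xs = d then (\<Prod>k<d. a k $ (xs ! k)) else 0)"

definition is_decomposition :: "nat \<Rightarrow> 'n::finite tensor \<Rightarrow> nat \<Rightarrow> (nat \<Rightarrow> nat \<Rightarrow> complex^'n) \<Rightarrow> bool" where
  "is_decomposition d T r a \<longleftrightarrow> T = (\<lambda>xs. \<Sum>i<r. outer d (a i) xs)"

definition tensor_rank :: "nat \<Rightarrow> 'n::finite tensor \<Rightarrow> nat" where
  "tensor_rank d T = (LEAST r. \<exists>a. is_decomposition d T r a)"

definition minimal_decomposition :: "nat \<Rightarrow> 'n::finite tensor \<Rightarrow> nat \<Rightarrow> (nat \<Rightarrow> nat \<Rightarrow> complex^'n) \<Rightarrow> bool" where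
  "minimal_decomposition d T r a \<longleftrightarrow> is_decomposition d T r a \<and> r = tensor_rank d T"

definition symmetric_decomposition :: "nat \<Rightarrow> nat \<Rightarrow> (nat \<Rightarrow> nat \<Rightarrow> complex^'n) \<Rightarrow> bool" where
  "symmetric_decomposition d r a \<longleftrightarrow> (\<forall>i<r. symmetric_tensor d (outer d (a i)))"

definition matrix_rank :: "'x set \<Rightarrow> 'y set \<Rightarrow> ('x \<Rightarrow> 'y \<Rightarrow> complex) \<Rightarrow> nat" where
  "matrix_rank X Y M = (LEAST r. \<exists>u v. \<forall>x\<in>X. \<forall>y\<in>Y.
       M x y = (\<Sum>i<r. u i x * v i y))"

definition flattening_rank :: "nat \<Rightarrow> nat \<Rightarrow> 'n::finite tensor \<Rightarrow> nat" where
  "flattening_rank d k T = matrix_rank {xs. length xs = k} {ys. length ys = d - k}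
      (\<lambda>xs ys. T (xs @ ys))"

text \<open>The element \<Otimes>_{j\<in>I} a^(j) of \<Otimes>_{j\<in>I} V, as a function of the indices (g j)_{j\<in>I}.\<close>
definition partial_outer :: "nat set \<Rightarrow> (nat \<Rightarrow> complex^'n) \<Rightarrow> (nat \<Rightarrow> 'n) \<Rightarrow> complex" where
  "partial_outer I a = (\<lambda>g. \<Prod>j\<in>I. a j $ g j)"

definition lin_indep_family :: "nat \<Rightarrow> (nat \<Rightarrow> 'x \<Rightarrow> complex) \<Rightarrow> bool" where
  "lin_indep_family r f \<longleftrightarrow>
     (\<forall>c. (\<forall>x. (\<Sum>i<r. c i * f i x) = 0) \<longrightarrow> (\<forall>i<r. c i = 0))"

end

theory Submission
  imports Defs
begin

lemma prod_nth_mset: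
  fixes f :: "'a \<Rightarrow> 'b::comm_monoid_mult"
  shows "(\<Prod>k<length xs. f (xs ! k)) = prod_mset (image_mset f (mset xs))"
proof -
  have "mset xs = image_mset (nth xs) (mset_set {0..<length xs})"
    by (metis map_nth mset_map mset_upt)
  then show ?thesis
    by (simp add: image_mset.compositionality prod_unfold_prod_mset o_def lessThan_atLeast0)
qed

lemma mset_perm_map:
  assumes "bij_betw \<tau> {0..<n} {0..<n}" "length w = n"
  shows "mset (map (\<lambda>m. w ! \<tau> m) [0..<n]) = mset w"
proof -
  have "mset (map (\<lambda>m. w ! \<tau> m) [0..<n]) = image_mset (nth w) (image_mset \<tau> (mset_set {0..<n}))"
    by (simp add: image_mset.compositionality o_def)
  also have "image_mset \<tau> (mset_set {0..<n}) = mset_set {0..<n}"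
    using assms(1) by (simp add: image_mset_mset_set bij_betw_def)
  also have "image_mset (nth w) (mset_set {0..<n}) = mset w"
    by (metis assms(2) map_nth mset_map mset_upt)
  finally show ?thesis .
qed

lemma matrix_rank_transpose:
  "matrix_rank Y X (\<lambda>y x. M x y) = matrix_rank X Y M"
proof -
  have "(\<lambda>r::nat. \<exists>u v. \<forall>y\<in>Y. \<forall>x\<in>X. M x y = (\<Sum>i<r. u i y * v i x)) =
        (\<lambda>r::nat. \<exists>u v. \<forall>x\<in>X. \<forall>y\<in>Y. M x y = (\<Sum>i<r. u i x * v i y))"
  proof (rule ext, rule iffI)
    fix r assume "\<exists>u v. \<forall>y\<in>Y. \<forall>x\<in>X. M x y = (\<Sum>i<r. u i y * v i x)"
    then obtain u v where h: "\<forall>y\<in>Y. \<forall>x\<in>X. M x y = (\<Sum>i<r. u i y * v i x)" by blast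
    have "\<forall>x\<in>X. \<forall>y\<in>Y. M x y = (\<Sum>i<r. v i x * u i y)" using h by (simp add: mult.commute)
    then show "\<exists>u v. \<forall>x\<in>X. \<forall>y\<in>Y. M x y = (\<Sum>i<r. u i x * v i y)" by blast
  next
    fix r assume "\<exists>u v. \<forall>x\<in>X. \<forall>y\<in>Y. M x y = (\<Sum>i<r. u i x * v i y)"
    then obtain u v where h: "\<forall>x\<in>X. \<forall>y\<in>Y. M x y = (\<Sum>i<r. u i x * v i y)" by blast
    have "\<forall>y\<in>Y. \<forall>x\<in>X. M x y = (\<Sum>i<r. v i y * u i x)" using h by (simp add: mult.commute)
    then show "\<exists>u v. \<forall>y\<in>Y. \<forall>x\<in>X. M x y = (\<Sum>i<r. u i y * v i x)" by blast
  qed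
  then show ?thesis unfolding matrix_rank_def by simp
qed

lemma matrix_rank_indep:
  fixes U :: "nat \<Rightarrow> 'x \<Rightarrow> complex" and W :: "nat \<Rightarrow> 'y \<Rightarrow> complex"
  assumes rep: "\<forall>x\<in>X. \<forall>y\<in>Y. M x y = (\<Sum>i<r. U i x * W i y)"
    and rk: "r \<le> matrix_rank X Y M"
    and c: "\<forall>x\<in>X. (\<Sum>i<r. c i * U i x) = 0"
  shows "\<forall>i<r. c i = 0"
proof (rule ccontr)
  assume "\<not> ?thesis"
  then obtain j where j: "j < r" "c j \<noteq> 0" by auto
  define sk where "sk i = (if i < j then i else Suc i)" for i
  define u where "u i = U (sk i)" for i
  define v where "v i y = W (sk i) y - c (sk i) / c j * W j y" for i y
  have bij: "bij_betw sk {..<r-1} ({..<r}-{j})"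
  proof (rule bij_betw_byWitness[where f'="\<lambda>i. if i < j then i else i - 1"])
  qed (use j in \<open>auto simp: sk_def\<close>)
  have "\<forall>x\<in>X. \<forall>y\<in>Y. M x y = (\<Sum>i<r-1. u i x * v i y)"
  proof (intro ballI)
    fix x y assume x: "x \<in> X" and y: "y \<in> Y"
    let ?A = "{..<r}-{j}"
    have fin: "finite ?A" by simp
    have "0 = (\<Sum>i<r. c i * U i x)" using c x by simp
    also have "\<dots> = c j * U j x + (\<Sum>i\<in>?A. c i * U i x)"
      using j by (simp add: sum.remove)
    finally have Uj: "U j x = - (\<Sum>i\<in>?A. c i * U i x) / c j"
      using j by (simp add: field_simps add_eq_0_iff)
    have "M x y = U j x * W j y + (\<Sum>i\<in>?A. U i x * W i y)"
      using rep x y j by (simp add: sum.remove)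
    also have "\<dots> = (\<Sum>i\<in>?A. U i x * W i y) - (\<Sum>i\<in>?A. c i * U i x) / c j * W j y"
      by (simp add: Uj)
    also have "\<dots> = (\<Sum>i\<in>?A. U i x * (W i y - c i / c j * W j y))"
      apply (simp add: sum_subtractf right_diff_distrib sum_divide_distrib sum_distrib_right)
      apply (simp add: sum_distrib_left mult_ac)
      done
    also have "\<dots> = (\<Sum>i<r-1. u i x * v i y)"
      using sum.reindex_bij_betw[OF bij, of "\<lambda>i. U i x * (W i y - c i / c j * W j y)"]
      by (simp add: u_def v_def)
    finally show "M x y = (\<Sum>i<r-1. u i x * v i y)" .
  qed
  then have "matrix_rank X Y M \<le> r - 1" unfolding matrix_rank_def by (intro Least_le) blast
  with rk j show False by linarith
qed

lemma outer_map:
  "outer d b (map G [0..<d]) = (\<Prod>m\<in>{0..<d}. b m $ G m)"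
  by (simp add: outer_def lessThan_atLeast0)

lemma dec_apply: "is_decomposition d T r a \<Longrightarrow> T zs = (\<Sum>i<r. outer d (a i) zs)"
  by (simp add: is_decomposition_def)

lemma lemA:
  fixes a :: "nat \<Rightarrow> nat \<Rightarrow> complex^'n::finite" and T :: "'n tensor"
  assumes sym: "symmetric_tensor d T" and dec: "is_decomposition d T r a"
    and pq: "p < d" "q < d" "p \<noteq> q" and S: "S \<subseteq> {0..<d} - {p,q}"
    and ind: "lin_indep_family r (\<lambda>i. partial_outer S (a i))"
    and nz: "\<forall>i<r. \<forall>j\<in>{0..<d}-{p,q}-S. a i j \<noteq> 0"
  shows "\<forall>i<r. a i p $ x * a i q $ y = a i p $ y * a i q $ x"
proof -
  define R where "R = {0..<d}-{p,q}-S"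
  define coef where "coef i = a i p $ x * a i q $ y - a i p $ y * a i q $ x" for i
  have key: "(\<Sum>i<r. (coef i * (\<Prod>m\<in>R. a i m $ g0 m)) * partial_outer S (a i) g) = 0" for g0 g
  proof -
    define G where "G u v m = (if m = p then u else if m = q then v else if m \<in> S then g m else g0 m)" for u v m
    define \<tau> where "\<tau> m = (if m = p then q else if m = q then p else m)" for m
    have bij: "bij_betw \<tau> {0..<d} {0..<d}"
      by (rule bij_betw_byWitness[where f'=\<tau>]) (auto simp: \<tau>_def pq)
    have z2: "map (\<lambda>m. map (G x y) [0..<d] ! \<tau> m) [0..<d] = map (G y x) [0..<d]"
      using pq by (auto simp: \<tau>_def G_def)
    have "mset (map (G y x) [0..<d]) = mset (map (G x y) [0..<d])"
      using mset_perm_map[OF bij, of "map (G x y) [0..<d]"] z2 by simp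
    hence eqT: "T (map (G x y) [0..<d]) = T (map (G y x) [0..<d])"
      using sym unfolding symmetric_tensor_def by simp
    have split: "(\<Prod>m\<in>{0..<d}. a i m $ G u v m) = a i p $ u * a i q $ v * (\<Prod>m\<in>R. a i m $ g0 m) * partial_outer S (a i) g" for i u v
    proof -
      have D: "{0..<d} = insert p (insert q (R \<union> S))" using pq S by (auto simp: R_def)
      have fin: "finite R" "finite S" using S by (auto simp: R_def intro: finite_subset)
      have "(\<Prod>m\<in>{0..<d}. a i m $ G u v m) = a i p $ G u v p * (a i q $ G u v q * ((\<Prod>m\<in>R. a i m $ G u v m) * (\<Prod>m\<in>S. a i m $ G u v m)))"
      proof -
        have pn: "p \<notin> insert q (R \<union> S)" and qn: "q \<notin> R \<union> S" and dj: "R \<inter> S = {}"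
          using pq S by (auto simp: R_def)
        show ?thesis unfolding D using fin pn qn dj by (simp add: prod.union_disjoint)
      qed
      also have "(\<Prod>m\<in>R. a i m $ G u v m) = (\<Prod>m\<in>R. a i m $ g0 m)"
        by (rule prod.cong) (auto simp: R_def G_def)
      also have "(\<Prod>m\<in>S. a i m $ G u v m) = partial_outer S (a i) g"
        unfolding partial_outer_def by (rule prod.cong) (use S in \<open>auto simp: G_def\<close>)
      finally show ?thesis using pq by (simp add: G_def mult_ac)
    qed
    have "0 = T (map (G x y) [0..<d]) - T (map (G y x) [0..<d])" using eqT by simp
    also have "\<dots> = (\<Sum>i<r. (coef i * (\<Prod>m\<in>R. a i m $ g0 m)) * partial_outer S (a i) g)"
    proof -
      have "T (map (G x y) [0..<d]) - T (map (G y x) [0..<d]) =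
            (\<Sum>i<r. outer d (a i) (map (G x y) [0..<d]) - outer d (a i) (map (G y x) [0..<d]))"
        unfolding dec_apply[OF dec] by (rule sum_subtractf[symmetric])
      also have "\<dots> = (\<Sum>i<r. (coef i * (\<Prod>m\<in>R. a i m $ g0 m)) * partial_outer S (a i) g)"
      proof (rule sum.cong[OF refl])
        fix i
        show "outer d (a i) (map (G x y) [0..<d]) - outer d (a i) (map (G y x) [0..<d]) =
              (coef i * (\<Prod>m\<in>R. a i m $ g0 m)) * partial_outer S (a i) g"
          unfolding outer_map split coef_def by (simp only: left_diff_distrib)
      qed
      finally show ?thesis .
    qed
    finally show ?thesis by simp
  qed
  show ?thesis
  proof (intro allI impI)
    fix i assume i: "i < r"
    define g0 where "g0 m = (SOME j. a i m $ j \<noteq> 0)" for m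
    have ind': "\<forall>c. (\<forall>x. (\<Sum>i<r. c i * partial_outer S (a i) x) = 0) \<longrightarrow> (\<forall>i<r. c i = 0)"
      using ind by (simp add: lin_indep_family_def)
    note imp = spec[OF ind', of "\<lambda>i. coef i * (\<Prod>m\<in>R. a i m $ g0 m)"]
    have "\<forall>i<r. coef i * (\<Prod>m\<in>R. a i m $ g0 m) = 0"
      using imp key by simp
    with i have c0: "coef i * (\<Prod>m\<in>R. a i m $ g0 m) = 0" by blast
    have finR: "finite R" by (simp add: R_def)
    have "(\<Prod>m\<in>R. a i m $ g0 m) \<noteq> 0"
    proof -
      have "\<forall>m\<in>R. a i m $ g0 m \<noteq> 0"
      proof
        fix m assume "m \<in> R"
        then have "a i m \<noteq> 0" using nz i by (auto simp: R_def)
        then have "\<exists>j. a i m $ j \<noteq> 0" by (metis vec_eq_iff zero_index)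
        then show "a i m $ g0 m \<noteq> 0" unfolding g0_def by (rule someI_ex)
      qed
      then show ?thesis using finR by simp
    qed
    with c0 have "coef i = 0" by simp
    then show "a i p $ x * a i q $ y = a i p $ y * a i q $ x" by (simp add: coef_def)
  qed
qed

lemma lemB:
  fixes a :: "nat \<Rightarrow> nat \<Rightarrow> complex^'n::finite"
  assumes d: "d > 0" and sw: "\<forall>i<r. \<forall>p<d. \<forall>q<d. \<forall>x y. a i p $ x * a i q $ y = a i p $ y * a i q $ x"
  shows "symmetric_decomposition d r a"
  unfolding symmetric_decomposition_def
proof (intro allI impI)
  fix i assume i: "i < r"
  show "symmetric_tensor d (outer d (a i))"
    unfolding symmetric_tensor_def is_tensor_def
  proof (intro conjI allI impI)
    fix xs :: "'n list" assume "length xs \<noteq> d" then show "outer d (a i) xs = 0" by (simp add: outer_def)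
  next
    fix xs ys :: "'n list" assume lx: "length xs = d" and ms: "mset xs = mset ys"
    have ly: "length ys = d" using lx ms by (metis size_mset)
    show "outer d (a i) xs = outer d (a i) ys"
    proof (cases "\<exists>j<d. a i j = 0")
      case True
      then obtain j where j: "j < d" "a i j = 0" by auto
      have "outer d (a i) zs = 0" if "length zs = d" for zs :: "'n list"
        using that j by (auto simp: outer_def prod_zero_iff intro!: bexI[of _ j])
      then show ?thesis using lx ly by simp
    next
      case False
      then have "a i 0 \<noteq> 0" using d by auto
      then obtain x0 where x0: "a i 0 $ x0 \<noteq> 0" by (metis vec_eq_iff zero_index)
      define lam where "lam k = a i k $ x0 / a i 0 $ x0" for k
      have propk: "a i k $ z = lam k * a i 0 $ z" if "k < d" for k z
      proof -
        have "a i k $ z * a i 0 $ x0 = a i k $ x0 * a i 0 $ z" using sw i that d by blast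
        then show ?thesis using x0 by (simp add: lam_def field_simps)
      qed
      have oeq: "outer d (a i) zs = (\<Prod>k<d. lam k) * prod_mset (image_mset (\<lambda>z. a i 0 $ z) (mset zs))"
        if "length zs = d" for zs :: "'n list"
      proof -
        have "outer d (a i) zs = (\<Prod>k<d. lam k * a i 0 $ (zs ! k))"
        proof -
          have "outer d (a i) zs = (\<Prod>k<d. a i k $ (zs ! k))" using that by (simp add: outer_def)
          also have "\<dots> = (\<Prod>k<d. lam k * a i 0 $ (zs ! k))"
            by (rule prod.cong[OF refl]) (rule propk, simp)
          finally show ?thesis .
        qed
        also have "\<dots> = (\<Prod>k<d. lam k) * (\<Prod>k<length zs. a i 0 $ (zs ! k))"
          using that by (simp add: prod.distrib)
        also have "(\<Prod>k<length zs. a i 0 $ (zs ! k)) = prod_mset (image_mset (\<lambda>z. a i 0 $ z) (mset zs))"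
          by (rule prod_nth_mset)
        finally show ?thesis .
      qed
      show ?thesis using oeq[OF lx] oeq[OF ly] ms by simp
    qed
  qed
qed


lemma lemC:
  fixes a :: "nat \<Rightarrow> nat \<Rightarrow> complex^'n::finite" and T :: "'n tensor"
  assumes sym: "symmetric_tensor d T" and dec: "is_decomposition d T r a"
    and rk: "r \<le> flattening_rank d k T" and S: "S \<subseteq> {0..<d}" "card S = k"
  shows "lin_indep_family r (\<lambda>i. partial_outer S (a i)) \<and>
         lin_indep_family r (\<lambda>i. partial_outer ({0..<d}-S) (a i))"
proof -
  have finS: "finite S" using S(1) by (rule finite_subset) simp
  have kd: "k \<le> d" using card_mono[OF _ S(1)] S(2) by simp
  let ?Sc = "{0..<d}-S"
  have cSc: "card ?Sc = d-k" using S finS by (simp add: card_Diff_subset)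
  obtain h1 where h1: "bij_betw h1 S {0..<k}" using finite_same_card_bij[OF finS, of "{0..<k}"] S by auto
  obtain h2 where h2: "bij_betw h2 ?Sc {k..<d}" using finite_same_card_bij[of ?Sc "{k..<d}"] cSc by auto
  define \<tau> where "\<tau> m = (if m \<in> S then h1 m else h2 m)" for m
  have b1: "bij_betw \<tau> S {0..<k}" using h1 by (rule bij_betw_cong[THEN iffD1, rotated]) (simp add: \<tau>_def)
  have b2: "bij_betw \<tau> ?Sc {k..<d}" using h2 by (rule bij_betw_cong[THEN iffD1, rotated]) (simp add: \<tau>_def)
  have bij\<tau>: "bij_betw \<tau> {0..<d} {0..<d}"
  proof -
    have "bij_betw \<tau> (S \<union> ?Sc) ({0..<k} \<union> {k..<d})" by (rule bij_betw_combine[OF b1 b2]) auto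
    moreover have "S \<union> ?Sc = {0..<d}" using S by auto
    moreover have "{0..<k} \<union> {k..<d} = {0..<d}" using kd by auto
    ultimately show ?thesis by simp
  qed
  define gx where "gx xs m = xs ! h1 m" for xs :: "'n list" and m
  define gy where "gy ys m = ys ! (h2 m - k)" for ys :: "'n list" and m
  define U where "U i xs = partial_outer S (a i) (gx xs)" for i xs
  define W where "W i ys = partial_outer ?Sc (a i) (gy ys)" for i ys
  define X where "X = {xs :: 'n list. length xs = k}"
  define Y where "Y = {ys :: 'n list. length ys = d - k}"
  have rep: "\<forall>xs\<in>X. \<forall>ys\<in>Y. T (xs@ys) = (\<Sum>i<r. U i xs * W i ys)"
  proof (intro ballI)
    fix xs ys assume xs: "xs \<in> X" and ys: "ys \<in> Y"
    let ?w = "xs@ys"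
    have lw: "length ?w = d" using xs ys kd by (simp add: X_def Y_def)
    define G where "G m = ?w ! \<tau> m" for m
    have "mset (map G [0..<d]) = mset ?w" unfolding G_def by (rule mset_perm_map[OF bij\<tau> lw])
    hence "T ?w = T (map G [0..<d])" using sym lw unfolding symmetric_tensor_def by simp
    also have "\<dots> = (\<Sum>i<r. outer d (a i) (map G [0..<d]))" by (rule dec_apply[OF dec])
    also have "\<dots> = (\<Sum>i<r. U i xs * W i ys)"
    proof (rule sum.cong[OF refl])
      fix i
      have "outer d (a i) (map G [0..<d]) = (\<Prod>m\<in>{0..<d}. a i m $ G m)" by (rule outer_map)
      also have "\<dots> = (\<Prod>m\<in>?Sc. a i m $ G m) * (\<Prod>m\<in>S. a i m $ G m)"
        using S(1) by (simp add: prod.subset_diff)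
      also have "(\<Prod>m\<in>S. a i m $ G m) = U i xs"
        unfolding U_def partial_outer_def
      proof (rule prod.cong[OF refl])
        fix m assume m: "m \<in> S"
        then have "h1 m < k" using h1 by (auto simp: bij_betw_def)
        then show "a i m $ G m = a i m $ gx xs m" using m xs by (simp add: G_def \<tau>_def gx_def X_def nth_append)
      qed
      also have "(\<Prod>m\<in>?Sc. a i m $ G m) = W i ys"
        unfolding W_def partial_outer_def
      proof (rule prod.cong[OF refl])
        fix m assume m: "m \<in> ?Sc"
        then have "h2 m \<ge> k" using h2 by (auto simp: bij_betw_def)
        then show "a i m $ G m = a i m $ gy ys m" using m xs by (simp add: G_def \<tau>_def gy_def X_def nth_append)
      qed
      finally show "outer d (a i) (map G [0..<d]) = U i xs * W i ys" by (simp add: mult.commute)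
    qed
    finally show "T (xs@ys) = (\<Sum>i<r. U i xs * W i ys)" .
  qed
  have rk': "r \<le> matrix_rank X Y (\<lambda>xs ys. T (xs@ys))"
    using rk by (simp add: flattening_rank_def X_def Y_def)
  have rep': "\<forall>ys\<in>Y. \<forall>xs\<in>X. (\<lambda>y x. T (x@y)) ys xs = (\<Sum>i<r. W i ys * U i xs)"
    using rep by (simp add: mult.commute)
  have rk'': "r \<le> matrix_rank Y X (\<lambda>y x. T (x@y))"
    using rk' matrix_rank_transpose[of Y X "\<lambda>xs ys. T (xs@ys)"] by simp
  have A: "lin_indep_family r (\<lambda>i. partial_outer S (a i))"
      unfolding lin_indep_family_def
    proof (rule allI, rule impI)
      fix c assume "\<forall>x. (\<Sum>i<r. c i * partial_outer S (a i) x) = 0"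
      then have "\<forall>xs\<in>X. (\<Sum>i<r. c i * U i xs) = 0" by (simp add: U_def)
      then show "\<forall>i<r. c i = 0" by (rule matrix_rank_indep[OF rep rk'])
    qed
  have B: "lin_indep_family r (\<lambda>i. partial_outer ?Sc (a i))"
      unfolding lin_indep_family_def
    proof (rule allI, rule impI)
      fix c assume "\<forall>x. (\<Sum>i<r. c i * partial_outer ?Sc (a i) x) = 0"
      then have "\<forall>ys\<in>Y. (\<Sum>i<r. c i * W i ys) = 0" by (simp add: W_def)
      then show "\<forall>i<r. c i = 0"
        using matrix_rank_indep[where M="\<lambda>y x. T (x@y)" and X=Y and Y=X and U=W and W=U and r=r and c=c] rep' rk''
        by simp
    qed
  show ?thesis using A B by blast
qed

lemma indep_nonzero:
  assumes "lin_indep_family r f" "i < r"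
  shows "\<exists>g. f i g \<noteq> 0"
proof (rule ccontr)
  assume "\<not> ?thesis"
  moreover have "(\<Sum>i'<r. (if i' = i then 1 else 0) * f i' g) = f i g" for g
  proof -
    have "(\<Sum>i'<r. (if i' = i then 1 else 0) * f i' g) = (\<Sum>i'<r. if i' = i then f i' g else 0)"
      by (rule sum.cong) auto
    then show ?thesis using assms(2) by simp
  qed
  ultimately have "\<forall>g. (\<Sum>i'<r. (if i' = i then 1 else 0) * f i' g) = 0" by simp
  then show False using assms unfolding lin_indep_family_def by fastforce
qed

lemma po_zero:
  assumes "j \<in> S" "finite S" "b j = 0"
  shows "partial_outer S b g = 0"
  using assms unfolding partial_outer_def by (auto intro!: bexI[of _ j])


theorem lemma1p1:
  fixes d :: nat and T :: "'n::finite tensor"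
  assumes "d > 2" and "symmetric_tensor d T"
  shows "((\<exists>k\<in>{1..d-1}. tensor_rank d T \<le> flattening_rank d k T) \<longrightarrow>
           (\<forall>r a. minimal_decomposition d T r a \<longrightarrow> symmetric_decomposition d r a))
       \<and> (\<forall>r a. is_decomposition d T r a \<longrightarrow>
           (\<forall>I. I \<subseteq> {0..<d} \<and> card I = d - 2 \<longrightarrow>
                 lin_indep_family r (\<lambda>i. partial_outer I (a i))) \<longrightarrow>
           symmetric_decomposition d r a)"
proof -
  have d0: "d > 0" using assms(1) by simp
  have P1: "(\<exists>k\<in>{1..d-1}. tensor_rank d T \<le> flattening_rank d k T) \<longrightarrow>
           (\<forall>r a. minimal_decomposition d T r a \<longrightarrow> symmetric_decomposition d r a)"
  proof (intro impI allI)
    fix r and a :: "nat \<Rightarrow> nat \<Rightarrow> complex^'n"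
    assume ex: "\<exists>k\<in>{1..d-1}. tensor_rank d T \<le> flattening_rank d k T"
      and md: "minimal_decomposition d T r a"
    obtain k where k: "k \<in> {1..d-1}" "tensor_rank d T \<le> flattening_rank d k T" using ex by blast
    have dec: "is_decomposition d T r a" and rr: "r \<le> flattening_rank d k T"
      using md k unfolding minimal_decomposition_def by auto
    have C0: "lin_indep_family r (\<lambda>i. partial_outer {0..<k} (a i)) \<and>
         lin_indep_family r (\<lambda>i. partial_outer ({0..<d}-{0..<k}) (a i))"
      using lemC[OF assms(2) dec rr, of "{0..<k}"] k by auto
    have nz: "\<forall>i<r. \<forall>j<d. a i j \<noteq> 0"
    proof (intro allI impI)
      fix i j assume i: "i < r" and j: "j < d"
      show "a i j \<noteq> 0"
      proof
        assume z: "a i j = 0"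
        show False
        proof (cases "j < k")
          case True
          from indep_nonzero[OF C0[THEN conjunct1] i] obtain g where "partial_outer {0..<k} (a i) g \<noteq> 0" by auto
          with po_zero[of j "{0..<k}" "a i" g] True z show False by auto
        next
          case False
          from indep_nonzero[OF C0[THEN conjunct2] i] obtain g where "partial_outer ({0..<d}-{0..<k}) (a i) g \<noteq> 0" by auto
          with po_zero[of j "{0..<d}-{0..<k}" "a i" g] False z j show False by auto
        qed
      qed
    qed
    have sw: "\<forall>i<r. \<forall>p<d. \<forall>q<d. \<forall>x y. a i p $ x * a i q $ y = a i p $ y * a i q $ x"
    proof (intro allI impI)
      fix i p q x y assume i: "i < r" "p < d" "q < d"
      show "a i p $ x * a i q $ y = a i p $ y * a i q $ x"
      proof (cases "p = q")
        case True then show ?thesis by (simp add: mult.commute)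
      next
        case pq: False
        obtain S' where S': "S' \<subseteq> {0..<d}-{p,q}" "lin_indep_family r (\<lambda>i. partial_outer S' (a i))"
        proof (cases "k \<le> d-2")
          case True
          have "card ({0..<d}-{p,q}) = d - 2" using i pq by (simp add: card_Diff_subset)
          then have "k \<le> card ({0..<d}-{p,q})" using True by simp
          then obtain S where S: "S \<subseteq> {0..<d}-{p,q}" "card S = k" by (rule obtain_subset_with_card_n)
          then show ?thesis using that lemC[OF assms(2) dec rr, of S] by auto
        next
          case False
          hence kk: "k = d-1" using k by auto
          have "\<exists>m::nat. m < 3 \<and> m \<noteq> p \<and> m \<noteq> q" by presburger
          then obtain m where m0: "m < 3" "m \<noteq> p" "m \<noteq> q" by blast
          then have m: "m < d" "m \<noteq> p" "m \<noteq> q" using assms(1) by linarith+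
          have cs: "card ({0..<d}-{m}) = k" using m kk by simp
          have eqm: "{0..<d} - ({0..<d}-{m}) = {m}" using m by auto
          have "lin_indep_family r (\<lambda>i. partial_outer {m} (a i))"
            using lemC[OF assms(2) dec rr, of "{0..<d}-{m}"] cs eqm by auto
          then show ?thesis using that[of "{m}"] m by auto
        qed
        show ?thesis using lemA[OF assms(2) dec i(2) i(3) pq S'(1) S'(2)] nz i by auto
      qed
    qed
    show "symmetric_decomposition d r a" by (rule lemB[OF d0 sw])
  qed
  have P2: "\<forall>r a. is_decomposition d T r a \<longrightarrow>
           (\<forall>I. I \<subseteq> {0..<d} \<and> card I = d - 2 \<longrightarrow>
                 lin_indep_family r (\<lambda>i. partial_outer I (a i))) \<longrightarrow>
           symmetric_decomposition d r a"
  proof (intro allI impI)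
    fix r and a :: "nat \<Rightarrow> nat \<Rightarrow> complex^'n"
    assume dec: "is_decomposition d T r a"
      and hI: "\<forall>I. I \<subseteq> {0..<d} \<and> card I = d - 2 \<longrightarrow> lin_indep_family r (\<lambda>i. partial_outer I (a i))"
    have sw: "\<forall>i<r. \<forall>p<d. \<forall>q<d. \<forall>x y. a i p $ x * a i q $ y = a i p $ y * a i q $ x"
    proof (intro allI impI)
      fix i p q x y assume i: "i < r" "p < d" "q < d"
      show "a i p $ x * a i q $ y = a i p $ y * a i q $ x"
      proof (cases "p = q")
        case True then show ?thesis by (simp add: mult.commute)
      next
        case pq: False
        have "card ({0..<d}-{p,q}) = d - 2" using i pq by (simp add: card_Diff_subset)
        then have ind: "lin_indep_family r (\<lambda>i. partial_outer ({0..<d}-{p,q}) (a i))" using hI by auto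
        show ?thesis using lemA[OF assms(2) dec i(2) i(3) pq _ ind] i by auto
      qed
    qed
    show "symmetric_decomposition d r a" by (rule lemB[OF d0 sw])
  qed
  show ?thesis using P1 P2 by blast
qed

end
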